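(* Let $\epsilon>0$, $T\in\mathbb{N}$, and $B\ge T$, and define $k=5\lfloor B/T\rfloor+5$. Then there exists an instance of the UVP problem (with total budget $B$, maximum per-configuration budget $T$, smoothness parameter $\epsilon$) satisfying the concavity assumption, with $k$ clusters each of radius $r_k>0$, such that no algorithm can achieve an approximation factor exceeding $(1-\epsilon r_k)$, where $r_k$ is the optimal clustering radius for $k$ clusters.
   Context: UVP problem: $A:\mathbb{R}^d\times[T]\to[0,1]$ is unknown ($[T]=\{1,\dots,T\}$); a finite $\mathcal{X}\subset\mathbb{R}^d$ is known; goal $\max_{b_1,\dots,b_n}\max_iA(\mathbf{x}_i,b_i)$ subject to $\sum_ib_i\le B$; obtaining $A(\mathbf{x},b)$ requires evaluating $A(\mathbf{x},1),\dots,A(\mathbf{x},b)$ in sequence, costing $b$ units. Instances satisfy Assumption 1 (monotonicity): $b_1\le b_2\Rightarrow A(\mathbf{x},b_1)\le A(\mathbf{x},b_2)$, and Assumption 2 (smoothness): for all $\mathbf{x}_i,\mathbf{x}_j\in\mathcal{X}$, $\min_{b\in[T]}A(\mathbf{x}_i,b)/A(\mathbf{x}_j,b)\ge1-\epsilon\|\mathbf{x}_i-\mathbf{x}_j\|_2$ (ratio $=1$ if both are $0$, $+\infty$ if only the denominator is $0$). Concavity assumption: for all $\mathbf{x}\in\mathcal{X}$ and $b\in\{2,\dots,T-1\}$, $A(\mathbf{x},b+1)-A(\mathbf{x},b)\le A(\mathbf{x},b)-A(\mathbf{x},b-1)$. The optimal clustering radius for $m$ clusters is $\min_{\mathcal{C}\subseteq\mathcal{X},|\mathcal{C}|=m}\max_{\mathbf{x}\in\mathcal{X}}\min_{\mathbf{c}\in\mathcal{C}}\|\mathbf{x}-\mathbf{c}\|_2$.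 An algorithm (possibly randomized) adaptively evaluates values within budget $B$ and outputs $\mathbf{x}^{Alg}$; it achieves approximation factor $\alpha$ on an instance if $\mathbb{E}[A(\mathbf{x}^{Alg},T)]\ge\alpha\max_{\mathbf{x}\in\mathcal{X}}A(\mathbf{x},T)$. *)

theory Defs
  imports "HOL-Probability.Probability"
begin

text \<open>Points of R^d are represented as real lists of length d.\<close>
type_synonym point = "real list"

definition l2dist :: "point \<Rightarrow> point \<Rightarrow> real" where
  "l2dist x y = sqrt (\<Sum>i<length x. (x ! i - y ! i)^2)"

definition opt_radius :: "point set \<Rightarrow> nat \<Rightarrow> real" where
  "opt_radius X m = (MIN C\<in>{C. C \<subseteq> X \<and> card C = m}. MAX x\<in>X. MIN c\<in>C. l2dist x c)"

definition ratio :: "real \<Rightarrow> real \<Rightarrow> ereal" where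
  "ratio a c = (if c = 0 then (if a = 0 then 1 else PInfty) else ereal (a / c))"

definition uvp_instance :: "point set \<Rightarrow> nat \<Rightarrow> real \<Rightarrow> (point \<Rightarrow> nat \<Rightarrow> real) \<Rightarrow> bool" where
  "uvp_instance X T eps A \<longleftrightarrow>
     (\<forall>x\<in>X. \<forall>b\<in>{1..T}. 0 \<le> A x b \<and> A x b \<le> 1) \<and>
     (\<forall>x\<in>X. \<forall>b1\<in>{1..T}. \<forall>b2\<in>{1..T}. b1 \<le> b2 \<longrightarrow> A x b1 \<le> A x b2) \<and>
     (\<forall>xi\<in>X. \<forall>xj\<in>X. \<forall>b\<in>{1..T}. ratio (A xi b) (A xj b) \<ge> ereal (1 - eps * l2dist xi xj))"

definition concave_instance :: "point set \<Rightarrow> nat \<Rightarrow> (point \<Rightarrow> nat \<Rightarrow> real) \<Rightarrow> bool" where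
  "concave_instance X T A \<longleftrightarrow>
     (\<forall>x\<in>X. \<forall>b\<in>{2..T-1}. A x (b+1) - A x b \<le> A x b - A x (b-1))"

text \<open>Algorithms: an adaptive randomized policy mapping the history of observations
  (queried point, observed value) to a distribution over actions.  Querying x observes
  the next value A(x, b+1), where b is the number of earlier queries of x (cost 1 each).\<close>
datatype action = Query point | Output point

type_synonym history = "(point \<times> real) list"
type_synonym policy = "history \<Rightarrow> action pmf"

definition level :: "history \<Rightarrow> point \<Rightarrow> nat" where
  "level h x = length (filter (\<lambda>q. fst q = x) h)"

definition valid_policy :: "point set \<Rightarrow> nat \<Rightarrow> nat \<Rightarrow> policy \<Rightarrow> bool" where
  "valid_policy X T B pol \<longleftrightarrow>
     (\<forall>h. \<forall>a\<in>set_pmf (pol h). case a of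
        Output x \<Rightarrow> x \<in> X
      | Query x \<Rightarrow> x \<in> X \<and> level h x < T \<and> length h < B)"

fun run :: "policy \<Rightarrow> (point \<Rightarrow> nat \<Rightarrow> real) \<Rightarrow> nat \<Rightarrow> history \<Rightarrow> point pmf" where
  "run pol A 0 h = bind_pmf (pol h) (\<lambda>a. case a of Output x \<Rightarrow> return_pmf x | Query x \<Rightarrow> return_pmf x)"
| "run pol A (Suc n) h = bind_pmf (pol h) (\<lambda>a. case a of
      Output x \<Rightarrow> return_pmf x
    | Query x \<Rightarrow> run pol A n (h @ [(x, A x (level h x + 1))]))"

text \<open>Output distribution of the algorithm with budget B (at most B queries, then output).\<close>
definition alg_output :: "nat \<Rightarrow> policy \<Rightarrow> (point \<Rightarrow> nat \<Rightarrow> real) \<Rightarrow> point pmf" where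
  "alg_output B pol A = run pol A (Suc B) []"

end

theory Submission
  imports Defs
begin

fun pt :: "action \<Rightarrow> point" where
  "pt (Query x) = x" | "pt (Output x) = x"

fun hit :: "policy \<Rightarrow> (point \<Rightarrow> nat \<Rightarrow> real) \<Rightarrow> nat \<Rightarrow> nat \<Rightarrow> history \<Rightarrow> point \<Rightarrow> real" where
  "hit pol A L 0 h x = measure_pmf.expectation (pol h) (\<lambda>a. if x = pt a then 1 else 0)"
| "hit pol A L (Suc n) h x = measure_pmf.expectation (pol h) (\<lambda>a. case a of
      Output y \<Rightarrow> (if x = y then 1 else 0)
    | Query y \<Rightarrow> (if y = x \<and> L \<le> level h y then 1 else hit pol A L n (h @ [(y, A y (level h y + 1))]) x))"

lemma int_pmf:
  fixes f :: "_ \<Rightarrow> real"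
  shows "(\<And>a. a \<in> set_pmf p \<Longrightarrow> \<bar>f a\<bar> \<le> c) \<Longrightarrow> integrable (measure_pmf p) f"
  by (intro measure_pmf.integrable_const_bound[where B=c]) (auto simp: AE_measure_pmf_iff)

lemma mono_pmf:
  fixes f g :: "_ \<Rightarrow> real"
  assumes "integrable (measure_pmf p) f" "integrable (measure_pmf p) g"
    "\<And>a. a \<in> set_pmf p \<Longrightarrow> f a \<le> g a"
  shows "measure_pmf.expectation p f \<le> measure_pmf.expectation p g"
  using assms by (intro integral_mono_AE) (auto simp: AE_measure_pmf_iff)

lemma le_const_pmf:
  fixes f :: "_ \<Rightarrow> real"
  assumes "integrable (measure_pmf p) f" "\<And>a. a \<in> set_pmf p \<Longrightarrow> f a \<le> c"
  shows "measure_pmf.expectation p f \<le> c"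
  using assms by (intro measure_pmf.integral_le_const) (auto simp: AE_measure_pmf_iff)

lemma ge_const_pmf:
  fixes f :: "_ \<Rightarrow> real"
  assumes "integrable (measure_pmf p) f" "\<And>a. a \<in> set_pmf p \<Longrightarrow> c \<le> f a"
  shows "c \<le> measure_pmf.expectation p f"
  using assms by (intro measure_pmf.integral_ge_const) (auto simp: AE_measure_pmf_iff)

lemma hit_bounds: "0 \<le> hit pol A L n h x \<and> hit pol A L n h x \<le> 1"
proof (induction n arbitrary: h)
  case 0
  have i: "integrable (measure_pmf (pol h)) (\<lambda>a. if x = pt a then 1 else 0 :: real)"
    by (rule int_pmf[where c=1]) auto
  show ?case using le_const_pmf[OF i, of 1] ge_const_pmf[OF i, of 0] by auto
next
  case (Suc n)
  let ?f = "\<lambda>a. case a of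
      Output y \<Rightarrow> (if x = y then 1 else 0)
    | Query y \<Rightarrow> (if y = x \<and> L \<le> level h y then 1 else hit pol A L n (h @ [(y, A y (level h y + 1))]) x)"
  have b: "0 \<le> ?f a \<and> ?f a \<le> 1" for a using Suc by (cases a) auto
  have i: "integrable (measure_pmf (pol h)) ?f"
    by (rule int_pmf[where c=1]) (use b in auto)
  show ?case using le_const_pmf[OF i, of 1] ge_const_pmf[OF i, of 0] b by simp
qed

lemma run0: "run pol A 0 h = map_pmf pt (pol h)"
  unfolding map_pmf_def by (simp; rule bind_pmf_cong) (auto split: action.splits)

lemma claim1:
  assumes agree: "\<And>y b. y \<noteq> xs \<or> b \<le> L \<Longrightarrow> A' y b = A y b"
  shows "pmf (run pol A' n h) xs \<le> hit pol A L n h xs"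
proof (induction n arbitrary: h)
  case 0
  have "pmf (run pol A' 0 h) xs = measure_pmf.expectation (pol h) (\<lambda>a. pmf (return_pmf (pt a)) xs)"
    unfolding run0 map_pmf_def pmf_bind by simp
  also have "\<dots> = hit pol A L 0 h xs"
    by (simp add: pmf_return indicator_def of_bool_def) (rule Bochner_Integration.integral_cong; auto)
  finally show ?case by simp
next
  case (Suc n)
  let ?f = "\<lambda>a. case a of
      Output y \<Rightarrow> (if xs = y then 1 else 0)
    | Query y \<Rightarrow> (if y = xs \<and> L \<le> level h y then 1 else hit pol A L n (h @ [(y, A y (level h y + 1))]) xs)"
  let ?g = "\<lambda>a. pmf (case a of Output x \<Rightarrow> return_pmf x
    | Query x \<Rightarrow> run pol A' n (h @ [(x, A' x (Suc (level h x)))])) xs"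
  have fb: "0 \<le> ?f a \<and> ?f a \<le> 1" for a using hit_bounds[of pol A L n] by (cases a) auto
  have gb: "0 \<le> ?g a \<and> ?g a \<le> 1" for a by (cases a) (auto simp: pmf_le_1)
  have le: "?g a \<le> ?f a" for a
  proof (cases a)
    case (Query y)
    show ?thesis
    proof (cases "y = xs \<and> L \<le> level h y")
      case True then show ?thesis using Query by (auto simp add: pmf_le_1)
    next
      case False
      then have "A' y (level h y + 1) = A y (level h y + 1)" by (intro agree) auto
      then show ?thesis using Query False Suc by auto
    qed
  qed (auto simp: pmf_return indicator_def)
  have "pmf (run pol A' (Suc n) h) xs = measure_pmf.expectation (pol h) ?g"
    by (simp add: pmf_bind)
  also have "\<dots> \<le> measure_pmf.expectation (pol h) ?f"
    by (rule mono_pmf) (auto intro!: int_pmf[where c=1] simp: le fb gb abs_le_iff)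
  finally show ?case by simp
qed

lemma level_snoc: "level (h @ [(y, v)]) x = level h x + (if y = x then 1 else 0)"
  by (simp add: level_def)

lemma claim2:
  assumes valid: "valid_policy X T B pol" and fin: "finite X"
  shows "length h \<le> B \<Longrightarrow> (\<Sum>x\<in>{x\<in>X. level h x \<le> L}. hit pol A L n h x)
     \<le> 1 + (real B - real (length h) + (\<Sum>x\<in>{x\<in>X. level h x \<le> L}. real (level h x))) / (real L + 1)"
proof (induction n arbitrary: h)
  case 0
  let ?F = "{x\<in>X. level h x \<le> L}"
  have finF: "finite ?F" using fin by simp
  have nn: "0 \<le> (real B - real (length h) + (\<Sum>x\<in>?F. real (level h x))) / (real L + 1)"
    using 0 by (intro divide_nonneg_pos add_nonneg_nonneg sum_nonneg) auto
  have "(\<Sum>x\<in>?F. hit pol A L 0 h x) = measure_pmf.expectation (pol h) (\<lambda>a. \<Sum>x\<in>?F. if x = pt a then 1 else 0)"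
    unfolding hit.simps by (subst Bochner_Integration.integral_sum) (auto intro!: int_pmf[where c=1])
  also have "\<dots> \<le> 1"
    by (rule le_const_pmf) (auto intro!: int_pmf[where c=1] simp: finF sum.delta)
  finally show ?case using nn by linarith
next
  case (Suc n)
  define F where "F = {x\<in>X. level h x \<le> L}"
  define \<Phi> where "\<Phi> = (real B - real (length h) + (\<Sum>x\<in>F. real (level h x))) / (real L + 1)"
  have finF: "finite F" using fin by (simp add: F_def)
  have nn: "0 \<le> \<Phi>"
    using Suc.prems unfolding \<Phi>_def by (intro divide_nonneg_pos add_nonneg_nonneg sum_nonneg) auto
  define f where "f = (\<lambda>x a. (case a of
      Output y \<Rightarrow> (if x = y then 1 else 0)
    | Query y \<Rightarrow> (if y = x \<and> L \<le> level h y then 1 else hit pol A L n (h @ [(y, A y (level h y + 1))]) x)) :: real)"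
  have fb: "0 \<le> f x a \<and> f x a \<le> 1" for x a using hit_bounds[of pol A L n] by (cases a) (auto simp: f_def)
  have hs: "hit pol A L (Suc n) h x = measure_pmf.expectation (pol h) (f x)" for x
    by (simp add: f_def)
  have key: "(\<Sum>x\<in>F. f x a) \<le> 1 + \<Phi>" if a: "a \<in> set_pmf (pol h)" for a
  proof (cases a)
    case (Output y)
    have "(\<Sum>x\<in>F. f x a) = (if y \<in> F then 1 else 0)"
      using finF by (simp add: f_def Output sum.delta)
    then show ?thesis using nn by simp
  next
    case (Query y)
    have yX: "y \<in> X" and lenh: "length h < B"
      using valid a Query unfolding valid_policy_def by fastforce+
    define h' where "h' = h @ [(y, A y (level h y + 1))]"
    have lev: "level h' x = level h x + (if y = x then 1 else 0)" for x
      by (simp add: h'_def level_snoc)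
    have lenh': "length h' \<le> B" using lenh by (simp add: h'_def)
    have IH: "(\<Sum>x\<in>{x\<in>X. level h' x \<le> L}. hit pol A L n h' x)
       \<le> 1 + (real B - real (length h') + (\<Sum>x\<in>{x\<in>X. level h' x \<le> L}. real (level h' x))) / (real L + 1)"
      using Suc.IH[OF lenh'] .
    have lh': "real (length h') = real (length h) + 1" by (simp add: h'_def)
    consider "level h y < L" | "level h y = L" | "level h y > L" by linarith
    then show ?thesis
    proof cases
      case 1
      have F': "{x\<in>X. level h' x \<le> L} = F" using 1 by (auto simp: F_def lev)
      have yF: "y \<in> F" using 1 yX by (simp add: F_def)
      have "(\<Sum>x\<in>F. real (level h' x)) = (\<Sum>x\<in>F. real (level h x) + (if y = x then 1 else 0))"
        by (intro sum.cong) (auto simp: lev)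
      also have "\<dots> = (\<Sum>x\<in>F. real (level h x)) + 1"
        using finF yF by (simp add: sum.distrib sum.delta)
      finally have S: "(\<Sum>x\<in>F. real (level h' x)) = (\<Sum>x\<in>F. real (level h x)) + 1" .
      have "(\<Sum>x\<in>F. f x a) = (\<Sum>x\<in>F. hit pol A L n h' x)"
        using 1 by (intro sum.cong) (auto simp: f_def Query h'_def)
      also have "\<dots> \<le> 1 + \<Phi>" using IH unfolding F' S lh' \<Phi>_def by (simp add: algebra_simps)
      finally show ?thesis .
    next
      case 2
      have F': "{x\<in>X. level h' x \<le> L} = F - {y}" using 2 by (auto simp: F_def lev)
      have yF: "y \<in> F" using 2 yX by (simp add: F_def)
      have S: "(\<Sum>x\<in>F - {y}. real (level h' x)) = (\<Sum>x\<in>F. real (level h x)) - L"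
      proof -
        have "(\<Sum>x\<in>F - {y}. real (level h' x)) = (\<Sum>x\<in>F - {y}. real (level h x))"
          by (intro sum.cong) (auto simp: lev)
        also have "\<dots> = (\<Sum>x\<in>F. real (level h x)) - real (level h y)"
          using finF yF by (simp add: sum_diff1)
        finally show ?thesis using 2 by simp
      qed
      have "(\<Sum>x\<in>F. f x a) = f y a + (\<Sum>x\<in>F - {y}. f x a)"
        using finF yF by (simp add: sum.remove)
      also have "\<dots> = 1 + (\<Sum>x\<in>F - {y}. hit pol A L n h' x)"
      proof -
        have "f y a = 1" using 2 by (simp add: f_def Query)
        moreover have "(\<Sum>x\<in>F - {y}. f x a) = (\<Sum>x\<in>F - {y}. hit pol A L n h' x)"
        proof (rule sum.cong)
          fix x assume "x \<in> F - {y}"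
          then have "y \<noteq> x" by blast
          then show "f x a = hit pol A L n h' x" unfolding f_def Query h'_def by simp
        qed simp
        ultimately show ?thesis by simp
      qed
      also have "\<dots> \<le> 1 + \<Phi>"
      proof -
        have "real B - (real (length h) + 1) + ((\<Sum>x\<in>F. real (level h x)) - real L)
            = (real B - real (length h) + (\<Sum>x\<in>F. real (level h x))) - (real L + 1)" by simp
        then have "(real B - (real (length h) + 1) + ((\<Sum>x\<in>F. real (level h x)) - real L)) / (real L + 1)
            = \<Phi> - 1"
        proof -
          have D: "real L + 1 \<noteq> 0" by linarith
          have "\<Phi> - 1 = ((real B - real (length h) + (\<Sum>x\<in>F. real (level h x))) - (real L + 1)) / (real L + 1)"
            unfolding \<Phi>_def using D by (simp add: diff_divide_distrib)
          then show ?thesis using \<open>real B - (real (length h) + 1) + ((\<Sum>x\<in>F. real (level h x)) - real L)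
            = (real B - real (length h) + (\<Sum>x\<in>F. real (level h x))) - (real L + 1)\<close> by simp
        qed
        then show ?thesis using IH unfolding F' S lh' by simp
      qed
      finally show ?thesis .
    next
      case 3
      have F': "{x\<in>X. level h' x \<le> L} = F" using 3 by (auto simp: F_def lev)
      have yF: "y \<notin> F" using 3 by (simp add: F_def)
      have S: "(\<Sum>x\<in>F. real (level h' x)) = (\<Sum>x\<in>F. real (level h x))"
        using yF by (intro sum.cong) (auto simp: lev)
      have "(\<Sum>x\<in>F. f x a) = (\<Sum>x\<in>F. hit pol A L n h' x)"
        using yF by (intro sum.cong) (auto simp: f_def Query h'_def)
      also have "\<dots> \<le> 1 + \<Phi>"
      proof -
        have "(real B - (real (length h) + 1) + (\<Sum>x\<in>F. real (level h x))) / (real L + 1) \<le> \<Phi>"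
          unfolding \<Phi>_def by (intro divide_right_mono) auto
        then show ?thesis using IH unfolding F' S lh' by simp
      qed
      finally show ?thesis .
    qed
  qed
  have "(\<Sum>x\<in>F. hit pol A L (Suc n) h x) = measure_pmf.expectation (pol h) (\<lambda>a. \<Sum>x\<in>F. f x a)"
    unfolding hs by (subst Bochner_Integration.integral_sum) (auto intro!: int_pmf[where c=1] simp: fb abs_le_iff)
  also have "\<dots> \<le> 1 + \<Phi>"
    by (rule le_const_pmf[OF _ key]) (rule int_pmf[where c="card F"], use fb in \<open>auto intro!: sum_bounded_above[where K=1, simplified] simp: abs_le_iff sum_nonneg\<close>)
  finally show ?case unfolding F_def \<Phi>_def .
qed

lemma l2_single: "l2dist [a] [b] = \<bar>a - b\<bar>"
  by (simp add: l2dist_def)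

lemma exists_le_avg:
  fixes f :: "'a \<Rightarrow> real"
  assumes "finite S" "S \<noteq> {}"
  shows "\<exists>x\<in>S. f x \<le> sum f S / real (card S)"
proof (rule ccontr)
  assume "\<not> ?thesis"
  then have "\<forall>x\<in>S. sum f S / real (card S) < f x" by auto
  then have "(\<Sum>x\<in>S. sum f S / real (card S)) < sum f S"
    using assms by (intro sum_strict_mono) auto
  moreover have "card S > 0" using assms by (simp add: card_gt_0_iff)
  ultimately show False by simp
qed

theorem corollary2:
  fixes eps :: real and T B :: nat
  assumes "eps > 0" and "T \<ge> 1" and "B \<ge> T"
  defines "k \<equiv> 5 * (B div T) + 5"
  shows "\<exists>(d::nat) (X::point set).
           finite X \<and> X \<noteq> {} \<and> (\<forall>x\<in>X. length x = d) \<and>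
           opt_radius X k > 0 \<and>
           (\<forall>\<alpha>::real. \<alpha> > 1 - eps * opt_radius X k \<longrightarrow>
              (\<forall>pol. valid_policy X T B pol \<longrightarrow>
                 (\<exists>A. uvp_instance X T eps A \<and> concave_instance X T A \<and>
                      measure_pmf.expectation (alg_output B pol A) (\<lambda>x. A x T)
                        < \<alpha> * (MAX x\<in>X. A x T))))"
proof -
  note epos = \<open>eps > 0\<close> and T1 = \<open>T \<ge> 1\<close>
  define q where "q = B div T"
  have kq: "k = 5 * q + 5" by (simp add: k_def q_def)
  define u where "u = 1 / (eps * real T)"
  have upos: "u > 0" using epos T1 by (simp add: u_def)
  have epsu: "eps * u = 1 / real T" using epos T1 by (simp add: u_def)
  define c where "c = (\<lambda>j::nat. if j = k then - (u / 2) else real j * u)"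
  define P where "P = (\<lambda>j. [c j])"
  define X where "X = P ` {0..k}"
  have finX: "finite X" by (simp add: X_def)
  have nemX: "X \<noteq> {}" by (simp add: X_def)
  have lenX: "\<forall>x\<in>X. length x = 1" by (auto simp: X_def P_def)
  have cinj: "inj_on c {0..k}"
  proof (rule inj_onI)
    fix i j assume ij: "i \<in> {0..k}" "j \<in> {0..k}" "c i = c j"
    show "i = j"
    proof (cases "i = k"; cases "j = k")
      assume "i \<noteq> k" "j \<noteq> k" then show ?thesis using ij upos by (simp add: c_def)
    next
      assume "i = k" "j \<noteq> k"
      then have "- (u/2) = real j * u" using ij by (simp add: c_def)
      moreover have "real j * u \<ge> 0" using upos by simp
      ultimately show ?thesis using upos by linarith
    next
      assume "i \<noteq> k" "j = k"
      then have "- (u/2) = real i * u" using ij by (simp add: c_def)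
      moreover have "real i * u \<ge> 0" using upos by simp
      ultimately show ?thesis using upos by linarith
    qed simp
  qed
  have Pinj: "inj_on P {0..k}" using cinj by (auto simp: inj_on_def P_def)
  have cardX: "card X = k + 1" using Pinj by (simp add: X_def card_image)
  have distP: "l2dist (P i) (P j) = \<bar>c i - c j\<bar>" for i j by (simp add: P_def l2_single)
  have dist_pos: "l2dist x y > 0" if "x \<in> X" "y \<in> X" "x \<noteq> y" for x y
    using that by (auto simp: X_def P_def l2_single)
  have dist_nn: "l2dist x y \<ge> 0" for x y by (simp add: l2dist_def sum_nonneg)
  define \<C> where "\<C> = {C. C \<subseteq> X \<and> card C = k}"
  define g where "g = (\<lambda>C. MAX x\<in>X. MIN c\<in>C. l2dist x c)"
  have r_eq: "opt_radius X k = Min (g ` \<C>)" by (simp add: opt_radius_def \<C>_def g_def)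
  have finC: "finite \<C>"
  proof -
    have "\<C> \<subseteq> Pow X" by (auto simp: \<C>_def)
    moreover have "finite (Pow X)" using finX by (simp only: finite_Pow_iff)
    ultimately show ?thesis by (rule finite_subset)
  qed
  define C0 where "C0 = P ` {0..<k}"
  have C0C: "C0 \<in> \<C>"
  proof -
    have "inj_on P {0..<k}" using Pinj by (rule inj_on_subset) auto
    then have "card C0 = k" unfolding C0_def by (simp add: card_image)
    moreover have "C0 \<subseteq> X" unfolding C0_def X_def by (intro image_mono) auto
    ultimately show ?thesis by (simp add: \<C>_def)
  qed
  have gC0: "g C0 \<le> u / 2"
  proof -
    have "(MIN c\<in>C0. l2dist x c) \<le> u / 2" if xX: "x \<in> X" for x
    proof -
      obtain j where j: "j \<in> {0..k}" "x = P j" using xX by (auto simp: X_def)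
      show ?thesis
      proof (cases "j = k")
        case True
        have "P 0 \<in> C0" using kq by (simp add: C0_def)
        then have "(MIN c\<in>C0. l2dist x c) \<le> l2dist x (P 0)" by (intro Min_le) (auto simp: C0_def)
        also have "\<dots> = u / 2" using True j upos kq by (simp add: distP c_def)
        finally show ?thesis .
      next
        case False
        then have "P j \<in> C0" using j by (simp add: C0_def)
        then have "(MIN c\<in>C0. l2dist x c) \<le> l2dist x (P j)" by (intro Min_le) (auto simp: C0_def)
        also have "\<dots> = 0" using j by (simp add: distP)
        finally show ?thesis using upos by simp
      qed
    qed
    then show ?thesis unfolding g_def using finX nemX by (subst Max_le_iff) auto
  qed
  have r_le: "opt_radius X k \<le> u / 2"
  proof -
    have "Min (g ` \<C>) \<le> g C0" using finC C0C by (intro Min_le) auto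
    then show ?thesis unfolding r_eq using gC0 by linarith
  qed
  have r_pos: "opt_radius X k > 0"
  proof -
    have "0 < g C" if C: "C \<in> \<C>" for C
    proof -
      have CX: "C \<subseteq> X" and cC: "card C = k" using C by (auto simp: \<C>_def)
      have finC': "finite C" using CX finX by (rule finite_subset)
      have "C \<noteq> {}" using cC kq by auto
      obtain x where x: "x \<in> X" "x \<notin> C"
      proof -
        have "\<not> X \<subseteq> C"
        proof
          assume "X \<subseteq> C"
          then have "card X \<le> card C" using finC' by (rule card_mono[rotated])
          then show False using cardX cC by simp
        qed
        then show ?thesis using that by auto
      qed
      have "0 < (MIN c\<in>C. l2dist x c)"
        using finC' \<open>C \<noteq> {}\<close> x CX by (auto simp: Min_gr_iff intro!: dist_pos)
      also have "\<dots> \<le> g C" unfolding g_def using finX x by (intro Max_ge) auto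
      finally show ?thesis .
    qed
    moreover have "\<C> \<noteq> {}" using C0C by auto
    ultimately show ?thesis unfolding r_eq using finC by (simp add: Min_gr_iff)
  qed
  have main: "\<exists>A. uvp_instance X T eps A \<and> concave_instance X T A \<and>
                      measure_pmf.expectation (alg_output B pol A) (\<lambda>x. A x T)
                        < \<alpha> * (MAX x\<in>X. A x T)"
    if al: "\<alpha> > 1 - eps * opt_radius X k" and valid: "valid_policy X T B pol" for \<alpha> pol
  proof -
    define L where "L = T - 1"
    have LT: "real L + 1 = real T" using T1 by (simp add: L_def)
    define A0 where "A0 = (\<lambda>(x::point) (b::nat). real (min b (T - 1)) / real T)"
    define S where "S = P ` {1..k-1}"
    have SX: "S \<subseteq> X" by (auto simp: S_def X_def)
    have cardS: "card S = k - 1"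
    proof -
      have "inj_on P {1..k-1}" using Pinj by (rule inj_on_subset) auto
      then show ?thesis by (simp add: S_def card_image)
    qed
    have finS: "finite S" using SX finX by (rule finite_subset)
    have nemS: "S \<noteq> {}" using cardS kq by auto
    let ?H = "\<lambda>x. hit pol A0 L (Suc B) [] x"
    have sumX: "(\<Sum>x\<in>X. ?H x) \<le> 1 + real B / real T"
    proof -
      have "{x\<in>X. level [] x \<le> L} = X" by (simp add: level_def)
      then show ?thesis using claim2[OF valid finX, where h="[]" and L=L and A=A0 and n="Suc B"] LT by (simp del: hit.simps add: level_def)
    qed
    have sumS: "(\<Sum>x\<in>S. ?H x) \<le> 1 + real B / real T"
      using sum_mono2[OF finX SX, of ?H] hit_bounds[of pol A0 L "Suc B" "[]"] sumX by fastforce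
    obtain xs where xsS: "xs \<in> S" and hxs: "?H xs \<le> (\<Sum>x\<in>S. ?H x) / real (card S)"
      using exists_le_avg[OF finS nemS] by blast
    have half: "?H xs \<le> 1 / 2"
    proof -
      have m: "B mod T < T" using T1 by simp
      have e: "T * q + B mod T = B" by (simp add: q_def)
      have "B < T * (q + 1)" using m e by (simp add: distrib_left)
      then have "real B < real (T * (q + 1))" by (simp only: of_nat_less_iff)
      then have "real B < real T * (real q + 1)" by (simp add: distrib_left)
      then have "real B / real T < real q + 1" using T1 by (simp add: divide_less_eq mult.commute)
      then have "(\<Sum>x\<in>S. ?H x) \<le> real q + 2" using sumS by linarith
      moreover have "real (card S) = 5 * real q + 4" using cardS kq by simp
      ultimately have "(\<Sum>x\<in>S. ?H x) / real (card S) \<le> (real q + 2) / (5 * real q + 4)"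
        by (metis divide_right_mono of_nat_0_le_iff)
      also have "\<dots> \<le> 1 / 2" by (simp add: divide_simps)
      finally show ?thesis using hxs by linarith
    qed
    obtain i where i: "i \<in> {1..k-1}" "xs = P i" using xsS by (auto simp: S_def)
    have xsX: "xs \<in> X" using xsS SX by auto
    have ik: "i \<noteq> k" using i kq by auto
    have far: "l2dist y xs \<ge> u \<and> l2dist xs y \<ge> u" if "y \<in> X" "y \<noteq> xs" for y
    proof -
      note yX = that
      obtain j where j: "j \<in> {0..k}" "y = P j" using yX by (auto simp: X_def)
      have ji: "j \<noteq> i" using j i yX by auto
      have "\<bar>c j - c i\<bar> \<ge> u"
      proof (cases "j = k")
        case True
        then have "c j - c i = - (u/2) - real i * u" using ik by (simp add: c_def)
        moreover have "real i * u \<ge> u" using i upos by simp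
        ultimately show ?thesis using upos by linarith
      next
        case False
        then have "c j - c i = (real j - real i) * u" using ik by (simp add: c_def algebra_simps)
        moreover have "\<bar>real j - real i\<bar> \<ge> 1" using ji by linarith
        ultimately show ?thesis using upos by (simp add: abs_mult)
      qed
      then show ?thesis using j i by (simp add: distP abs_minus_commute)
    qed
    define A' where "A' = (\<lambda>x b. if x = xs then real b / real T else A0 x b)"
    have agree: "A' y b = A0 y b" if "y \<noteq> xs \<or> b \<le> L" for y b
      using that by (auto simp: A'_def A0_def L_def min_absorb1)
    have p_le: "pmf (alg_output B pol A') xs \<le> 1 / 2"
      using claim1[where xs=xs and L=L and A'=A' and A=A0 and pol=pol and n="Suc B" and h="[]", OF agree] half by (simp add: alg_output_def)
    have Tpos: "real T > 0" using T1 by simp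
    have uvp: "uvp_instance X T eps A'"
      unfolding uvp_instance_def
    proof (intro conjI ballI impI)
      fix x b assume "x \<in> X" "b \<in> {1..T}"
      then show "0 \<le> A' x b" "A' x b \<le> 1" by (auto simp: A'_def A0_def)
    next
      fix x b1 b2 assume "x \<in> X" "b1 \<in> {1..T}" "b2 \<in> {1..T}" "b1 \<le> b2"
      then show "A' x b1 \<le> A' x b2" using Tpos by (auto simp: A'_def A0_def divide_right_mono)
    next
      fix xi xj b assume xi: "xi \<in> X" and xj: "xj \<in> X" and b: "b \<in> {1..T}"
      have same: "ratio a a \<ge> ereal (1 - eps * l2dist xi xj)" for a
        using dist_nn[of xi xj] epos by (simp add: ratio_def)
      show "ereal (1 - eps * l2dist xi xj) \<le> ratio (A' xi b) (A' xj b)"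
      proof (cases "xi = xs"; cases "xj = xs")
        assume "xi = xs" "xj = xs" then show ?thesis using same by simp
      next
        assume "xi \<noteq> xs" "xj \<noteq> xs" then show ?thesis using same by (simp add: A'_def A0_def)
      next
        assume 1: "xi = xs" "xj \<noteq> xs"
        show ?thesis
        proof (cases "min b (T - 1) = 0")
          case True then show ?thesis using 1 b T1 by (simp add: A'_def A0_def ratio_def)
        next
          case False
          have "1 - eps * l2dist xi xj \<le> 1" using dist_nn[of xi xj] epos by simp
          also have "1 \<le> (real b / real T) / (real (min b (T - 1)) / real T)"
            using False Tpos by (simp add: divide_simps)
          finally show ?thesis using 1 False by (simp add: A'_def A0_def ratio_def)
        qed
      next
        assume 1: "xi \<noteq> xs" "xj = xs"
        have d: "l2dist xi xj \<ge> u" using far[OF xi 1(1)] 1 by simp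
        have "1 - eps * l2dist xi xj \<le> 1 - eps * u" using d epos by (simp add: mult_left_mono)
        also have "\<dots> = 1 - 1 / real T" using epsu by simp
        also have "\<dots> \<le> (real (min b (T - 1)) / real T) / (real b / real T)"
        proof (cases "b \<le> T - 1")
          case True
          then have "(real (min b (T - 1)) / real T) / (real b / real T) = 1"
            using b Tpos by (simp add: min_absorb1)
          then show ?thesis using Tpos by simp
        next
          case False
          then have bT: "b = T" using b by auto
          then have "(real (min b (T - 1)) / real T) / (real b / real T) = real (T - 1) / real T"
            using Tpos by (simp add: min_absorb2)
          also have "\<dots> = 1 - 1 / real T" using T1 Tpos by (simp add: of_nat_diff divide_simps)
          finally show ?thesis by simp
        qed
        finally have "1 - eps * l2dist xi xj \<le> (real (min b (T - 1)) / real T) / (real b / real T)" .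
        moreover have "real b / real T \<noteq> 0" using b Tpos by auto
        ultimately show ?thesis using 1 by (simp add: A'_def A0_def ratio_def)
      qed
    qed
    have conc: "concave_instance X T A'"
      unfolding concave_instance_def
    proof (intro ballI)
      fix x b assume "x \<in> X" and b: "b \<in> {2..T-1}"
      have rb: "real (b - 1) = real b - 1" using b by (simp add: of_nat_diff)
      show "A' x (b + 1) - A' x b \<le> A' x b - A' x (b - 1)"
      proof (cases "x = xs")
        case True then show ?thesis using rb by (simp add: A'_def diff_divide_distrib[symmetric])
      next
        case False
        have m1: "min b (T - Suc 0) = b" "min (b - Suc 0) (T - Suc 0) = b - Suc 0" using b by auto
        have m2: "min (Suc b) (T - Suc 0) \<le> Suc b" by simp
        have "real (min (Suc b) (T - Suc 0)) - real (min b (T - Suc 0))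
              \<le> real (min b (T - Suc 0)) - real (min (b - Suc 0) (T - Suc 0))"
          unfolding m1 using m2 b by (simp add: of_nat_diff)
        then show ?thesis using False Tpos
          by (simp add: A'_def A0_def m1 diff_divide_distrib[symmetric] divide_right_mono)
      qed
    qed
    let ?p = "alg_output B pol A'"
    have AT: "A' x T = real (T - 1) / real T + (1 / real T) * indicator {xs} x" for x
    proof -
      have "real T / real T = real (T - 1) / real T + 1 / real T"
        using T1 by (simp add: of_nat_diff add_divide_distrib[symmetric])
      then show ?thesis by (simp add: A'_def A0_def indicator_def)
    qed
    have E: "measure_pmf.expectation ?p (\<lambda>x. A' x T) = real (T - 1) / real T + (1 / real T) * pmf ?p xs"
      unfolding AT
    proof (subst Bochner_Integration.integral_add)
      show "integrable (measure_pmf ?p) (\<lambda>x. real (T - 1) / real T)" by simp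
      show "integrable (measure_pmf ?p) (\<lambda>x. 1 / real T * indicator {xs} x)"
        by (rule int_pmf[where c="1 / real T"]) (auto simp: indicator_def)
    qed (simp add: measure_pmf_single)
    have "measure_pmf.expectation ?p (\<lambda>x. A' x T) \<le> real (T - 1) / real T + (1 / real T) * (1 / 2)"
    proof -
      have "(1 / real T) * pmf ?p xs \<le> (1 / real T) * (1 / 2)"
        using p_le Tpos by (intro mult_left_mono) auto
      then show ?thesis unfolding E by linarith
    qed
    also have "\<dots> = 1 - eps * (u / 2)"
    proof -
      have e2: "eps * (u / 2) = 1 / (2 * real T)" using epsu by simp
      show ?thesis unfolding e2 using T1 Tpos by (simp add: of_nat_diff field_simps)
    qed
    also have "\<dots> \<le> 1 - eps * opt_radius X k" using r_le epos by (simp add: mult_left_mono)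
    also have "\<dots> < \<alpha>" using al .
    finally have lt: "measure_pmf.expectation ?p (\<lambda>x. A' x T) < \<alpha>" .
    have M1: "1 \<le> (MAX x\<in>X. A' x T)"
    proof -
      have "A' xs T = 1" using Tpos by (simp add: A'_def)
      moreover have "A' xs T \<le> (MAX x\<in>X. A' x T)" using finX xsX by (intro Max_ge) auto
      ultimately show ?thesis by simp
    qed
    have apos: "\<alpha> > 0"
    proof -
      have "eps * opt_radius X k \<le> eps * (u / 2)" using r_le epos by (simp add: mult_left_mono)
      also have "\<dots> = 1 / (2 * real T)" using epsu by simp
      also have "\<dots> < 1" using T1 by (simp add: divide_simps)
      finally show ?thesis using al by linarith
    qed
    have "\<alpha> \<le> \<alpha> * (MAX x\<in>X. A' x T)" using M1 apos by simp
    then show ?thesis using uvp conc lt by (intro exI[of _ A']) simp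
  qed
  show ?thesis
    by (intro exI[of _ 1] exI[of _ X]) (use finX nemX lenX r_pos main in blast)
qed

end
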